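(* Let $a\in\mathcal A_2$ with $|a|=1$, $a\ne\pm1$, be written as $a=\cos\theta+v\,e_1e_2\sin\theta=\exp(\theta\,v\,e_1e_2)$ with $\theta\in(0,\pi)$, $v\in\mathcal A_2^{(0,1)}$, $|v|=1$. Let $\rho_a:\mathcal A_2^{(0,1)}\to\mathcal A_2^{(0,1)}$, $\rho_a(x)=a\,x\,(a')^{-1}$. Then $\rho_a\in\mathrm{SO}(3)$, $v$ is an eigenvector of $\rho_a$ with eigenvalue $1$, and $\rho_a$ is the rotation of angle $2\theta$ about $v$, i.e. its restriction to the orthogonal complement $v^\perp$ is the rotation by angle $2\theta$ with respect to the orientation of $v^\perp$ induced by $v$.
   Context: $\mathcal A_2$ is the real associative algebra generated by $e_1,e_2$ with $e_1^2=e_2^2=-1$, $e_1e_2=-e_2e_1$, with Euclidean norm in the basis $1,e_1,e_2,e_1e_2$. The main involution is $(a_0+a_1e_1+a_2e_2+a_{12}e_1e_2)'=a_0-a_1e_1-a_2e_2+a_{12}e_1e_2$. $\mathcal A_2^{(0,1)}=\mathbb R+\mathbb Re_1+\mathbb Re_2$ is regarded as Euclidean 3-space oriented by the ordered basis $(1,e_1,e_2)$; for a unit vector $v$, the plane $v^\perp$ is oriented so that a basis $(w_1,w_2)$ of $v^\perp$ is positive iff $(v,w_1,w_2)$ is a positive basis of $\mathcal A_2^{(0,1)}$. *)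

theory Defs
  imports "HOL-Analysis.Analysis"
begin

text \<open>The algebra A_2: elements a0 + a1 e1 + a2 e2 + a12 e1e2, stored by their
  coordinates in the basis 1, e1, e2, e1e2.\<close>

datatype A2 = A2 (cmp0: real) (cmp1: real) (cmp2: real) (cmp12: real)

definition A2_add :: "A2 \<Rightarrow> A2 \<Rightarrow> A2" where
  "A2_add a b = A2 (cmp0 a + cmp0 b) (cmp1 a + cmp1 b) (cmp2 a + cmp2 b) (cmp12 a + cmp12 b)"

text \<open>Product determined by e1^2 = e2^2 = -1, e1 e2 = - e2 e1 (bilinear extension).\<close>
definition A2_mult :: "A2 \<Rightarrow> A2 \<Rightarrow> A2" where
  "A2_mult a b = A2
     (cmp0 a * cmp0 b - cmp1 a * cmp1 b - cmp2 a * cmp2 b - cmp12 a * cmp12 b)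
     (cmp0 a * cmp1 b + cmp1 a * cmp0 b + cmp2 a * cmp12 b - cmp12 a * cmp2 b)
     (cmp0 a * cmp2 b - cmp1 a * cmp12 b + cmp2 a * cmp0 b + cmp12 a * cmp1 b)
     (cmp0 a * cmp12 b + cmp1 a * cmp2 b - cmp2 a * cmp1 b + cmp12 a * cmp0 b)"

definition A2_real :: "real \<Rightarrow> A2" where
  "A2_real t = A2 t 0 0 0"

definition A2_one :: A2 where "A2_one = A2_real 1"

definition A2_e12 :: A2 where "A2_e12 = A2 0 0 0 1"

definition A2_neg :: "A2 \<Rightarrow> A2" where
  "A2_neg a = A2 (- cmp0 a) (- cmp1 a) (- cmp2 a) (- cmp12 a)"

definition A2_norm :: "A2 \<Rightarrow> real" where
  "A2_norm a = sqrt ((cmp0 a)\<^sup>2 + (cmp1 a)\<^sup>2 + (cmp2 a)\<^sup>2 + (cmp12 a)\<^sup>2)"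

definition A2_main_inv :: "A2 \<Rightarrow> A2" where
  "A2_main_inv a = A2 (cmp0 a) (- cmp1 a) (- cmp2 a) (cmp12 a)"

definition A2_inverse :: "A2 \<Rightarrow> A2" where
  "A2_inverse a = (THE b. A2_mult a b = A2_one \<and> A2_mult b a = A2_one)"

definition A01 :: "A2 set" where
  "A01 = {b. cmp12 b = 0}"

definition rho :: "A2 \<Rightarrow> A2 \<Rightarrow> A2" where
  "rho a x = A2_mult (A2_mult a x) (A2_inverse (A2_main_inv a))"

definition to3 :: "A2 \<Rightarrow> real^3" where
  "to3 b = vector [cmp0 b, cmp1 b, cmp2 b]"

definition of3 :: "real^3 \<Rightarrow> A2" where
  "of3 x = A2 (x $ 1) (x $ 2) (x $ 3) 0"

definition rho3 :: "A2 \<Rightarrow> real^3 \<Rightarrow> real^3" where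
  "rho3 a x = to3 (rho a (of3 x))"

definition SO3 :: "(real^3 \<Rightarrow> real^3) set" where
  "SO3 = {f. orthogonal_transformation f \<and> det (matrix f) = 1}"

definition positive_basis3 :: "real^3 \<Rightarrow> real^3 \<Rightarrow> real^3 \<Rightarrow> bool" where
  "positive_basis3 u1 u2 u3 \<longleftrightarrow> det (vector [u1, u2, u3] :: real^3^3) > 0"

definition rotation_about :: "(real^3 \<Rightarrow> real^3) \<Rightarrow> real^3 \<Rightarrow> real \<Rightarrow> bool" where
  "rotation_about f v phi \<longleftrightarrow> f v = v \<and>
     (\<forall>w1 w2. w1 \<bullet> v = 0 \<and> w2 \<bullet> v = 0 \<and> norm w1 = 1 \<and> norm w2 = 1 \<and> w1 \<bullet> w2 = 0
        \<and> positive_basis3 v w1 w2 \<longrightarrow>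
        f w1 = cos phi *\<^sub>R w1 + sin phi *\<^sub>R w2 \<and>
        f w2 = (- sin phi) *\<^sub>R w1 + cos phi *\<^sub>R w2)"

end

theory Submission imports Defs begin

lemma A2_mult_assoc: "A2_mult (A2_mult a b) c = A2_mult a (A2_mult b c)"
  by (cases a; cases b; cases c) (simp add: A2_mult_def algebra_simps)

lemma A2_inv_unit:
  assumes "w^2 + x^2 + y^2 + z^2 = 1"
  shows "A2_inverse (A2 w x y z) = A2 w (-x) (-y) (-z)"
proof -
  let ?a = "A2 w x y z" and ?b = "A2 w (-x) (-y) (-z)"
  have r: "A2_mult ?a ?b = A2_one" and l: "A2_mult ?b ?a = A2_one"
    using assms by (simp_all add: A2_mult_def A2_one_def A2_real_def power2_eq_square algebra_simps)
  show ?thesis unfolding A2_inverse_def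
  proof (rule the_equality)
    show "A2_mult ?a ?b = A2_one \<and> A2_mult ?b ?a = A2_one" using r l by simp
  next
    fix c assume "A2_mult ?a c = A2_one \<and> A2_mult c ?a = A2_one"
    hence "A2_mult c ?a = A2_one" by simp
    have one: "\<And>t. A2_mult A2_one t = t" "\<And>t. A2_mult t A2_one = t"
      by (case_tac t, simp add: A2_mult_def A2_one_def A2_real_def)+
    have "c = A2_mult c (A2_mult ?a ?b)" using r one by simp
    also have "\<dots> = A2_mult (A2_mult c ?a) ?b" by (simp add: A2_mult_assoc)
    also have "\<dots> = ?b" using \<open>A2_mult c ?a = A2_one\<close> one by simp
    finally show "c = ?b" .
  qed
qed


definition MM :: "real \<Rightarrow> real \<Rightarrow> real \<Rightarrow> real \<Rightarrow> real \<Rightarrow> A2 \<Rightarrow> A2" where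
 "MM c s p q r X = A2_mult (A2_mult (A2 c (s*r) (-(s*q)) (s*p)) X) (A2 c (s*r) (-(s*q)) (-(s*p)))"

lemma MM12: "cmp12 (MM c s p q r (A2 x y z 0)) = 0"
  by (simp add: MM_def A2_mult_def algebra_simps)

lemma MMfix: assumes "c^2+s^2=1" "p^2+q^2+r^2=1" shows "MM c s p q r (A2 p q r 0) = A2 p q r 0"
proof -
  have "cmp0 (MM c s p q r (A2 p q r 0)) = p" unfolding MM_def A2_mult_def using assms by simp algebra
  moreover have "cmp1 (MM c s p q r (A2 p q r 0)) = q" unfolding MM_def A2_mult_def using assms by simp algebra
  moreover have "cmp2 (MM c s p q r (A2 p q r 0)) = r" unfolding MM_def A2_mult_def using assms by simp algebra
  ultimately show ?thesis using MM12[of c s p q r p q r] by (metis A2.collapse)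
qed

lemma MMrot: assumes "c^2+s^2=1" "p^2+q^2+r^2=1" "p*x+q*y+r*z=0"
  shows "cmp0 (MM c s p q r (A2 x y z 0)) = (c^2-s^2)*x + 2 * s * c * (q*z-r*y)"
    "cmp1 (MM c s p q r (A2 x y z 0)) = (c^2-s^2)*y + 2 * s * c * (r*x-p*z)"
    "cmp2 (MM c s p q r (A2 x y z 0)) = (c^2-s^2)*z + 2 * s * c * (p*y-q*x)"
  unfolding MM_def A2_mult_def using assms by (simp, algebra)+


lemma orth_basis_cross:
  fixes v w1 w2 :: "real^3"
  assumes "norm v = 1" "w1 \<bullet> v = 0" "w2 \<bullet> v = 0" "norm w1 = 1" "norm w2 = 1" "w1 \<bullet> w2 = 0"
    "positive_basis3 v w1 w2"
  shows "w2 = vector [v$2 * w1$3 - v$3 * w1$2, v$3 * w1$1 - v$1 * w1$3, v$1 * w1$2 - v$2 * w1$1]"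
proof -
  define M where "M = (vector [v, w1, w2] :: real^3^3)"
  have n: "v \<bullet> v = 1" "w1 \<bullet> w1 = 1" "w2 \<bullet> w2 = 1"
    using assms by (simp_all add: norm_eq_sqrt_inner)
  have i: "v \<bullet> w1 = 0" "v \<bullet> w2 = 0" "w2 \<bullet> w1 = 0" using assms by (simp_all add: inner_commute)
  have G: "M ** transpose M = mat 1"
    unfolding M_def using n i assms(2,3,6)
    by (simp add: vec_eq_iff forall_3 matrix_matrix_mult_def transpose_def mat_def sum_3 inner_vec_def)
  have "det M * det M = 1"
    using arg_cong[OF G, of det] by (simp add: det_mul)
  moreover have "det M > 0" using assms(7) unfolding positive_basis3_def M_def .
  ultimately have d1: "det M = 1"
  proof -
    have "(det M - 1) * (det M + 1) = 0" using \<open>det M * det M = 1\<close> by (simp add: algebra_simps)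
    thus ?thesis using \<open>det M > 0\<close> by auto
  qed
  define u where "u = (vector [v$2 * w1$3 - v$3 * w1$2, v$3 * w1$1 - v$1 * w1$3, v$1 * w1$2 - v$2 * w1$1] :: real^3)"
  have du: "det M = u \<bullet> w2"
    unfolding M_def u_def by (simp add: det_3 inner_vec_def sum_3 algebra_simps)
  have "u \<bullet> u = (v \<bullet> v) * (w1 \<bullet> w1) - (v \<bullet> w1)^2"
    unfolding u_def by (simp add: inner_vec_def sum_3 power2_eq_square algebra_simps)
  hence uu: "u \<bullet> u = 1" using n i by simp
  have "(w2 - u) \<bullet> (w2 - u) = 0"
    using uu n d1 du by (simp add: inner_diff inner_commute)
  hence "w2 = u" by simp
  thus ?thesis unfolding u_def .
qed


definition gg :: "real \<Rightarrow> real \<Rightarrow> real \<Rightarrow> real \<Rightarrow> real \<Rightarrow> real^3 \<Rightarrow> real^3" where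
  "gg c s p q r x = to3 (MM c s p q r (of3 x))"

lemma gg_comp: "gg c s p q r x $ 1 = cmp0 (MM c s p q r (A2 (x$1) (x$2) (x$3) 0))"
  "gg c s p q r x $ 2 = cmp1 (MM c s p q r (A2 (x$1) (x$2) (x$3) 0))"
  "gg c s p q r x $ 3 = cmp2 (MM c s p q r (A2 (x$1) (x$2) (x$3) 0))"
  by (simp_all add: gg_def to3_def of3_def)

lemma gg_linear: "linear (gg c s p q r)"
  by (rule linearI) (simp_all add: vec_eq_iff forall_3 gg_comp MM_def A2_mult_def algebra_simps)

lemma gg_inner: assumes "c^2+s^2=1" "p^2+q^2+r^2=1"
  shows "gg c s p q r x \<bullet> gg c s p q r y = x \<bullet> y"
  unfolding inner_vec_def sum_3 gg_comp MM_def A2_mult_def using assms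
  by simp algebra

lemma gg_det: assumes "c^2+s^2=1" "p^2+q^2+r^2=1"
  shows "det (matrix (gg c s p q r)) = 1"
  unfolding det_3 matrix_def using assms
  by (simp add: axis_def gg_comp MM_def A2_mult_def) algebra


theorem proposition4p3:
  fixes a v :: A2 and \<theta> :: real
  assumes "A2_norm a = 1" and "a \<noteq> A2_one" and "a \<noteq> A2_neg A2_one"
    and "0 < \<theta>" and "\<theta> < pi"
    and "v \<in> A01" and "A2_norm v = 1"
    and "a = A2_add (A2_real (cos \<theta>)) (A2_mult (A2_mult v A2_e12) (A2_real (sin \<theta>)))"
  shows "(\<forall>x\<in>A01. rho a x \<in> A01)
    \<and> rho3 a \<in> SO3
    \<and> v \<noteq> A2_real 0 \<and> rho a v = v
    \<and> rotation_about (rho3 a) (to3 v) (2 * \<theta>)"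
proof -
  define c where "c = cos \<theta>"
  define s where "s = sin \<theta>"
  have cs: "c^2 + s^2 = 1" unfolding c_def s_def by simp
  obtain p q r where v: "v = A2 p q r 0" using assms(6) unfolding A01_def by (cases v) auto
  have "sqrt (p^2 + q^2 + r^2) = 1" using assms(7) unfolding v A2_norm_def by simp
  hence pq: "p^2 + q^2 + r^2 = 1" by (metis real_sqrt_eq_1_iff)
  have ha: "a = A2 c (s*r) (-(s*q)) (s*p)"
    unfolding assms(8) v c_def s_def by (simp add: A2_add_def A2_real_def A2_mult_def A2_e12_def)
  have "c^2 + (-(s*r))^2 + (s*q)^2 + (s*p)^2 = c^2 + s^2 * (p^2+q^2+r^2)"
    by (simp add: power2_eq_square algebra_simps)
  hence "c^2 + (-(s*r))^2 + (s*q)^2 + (s*p)^2 = 1" using cs pq by simp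
  from A2_inv_unit[OF this]
  have inv: "A2_inverse (A2_main_inv a) = A2 c (s*r) (-(s*q)) (-(s*p))"
    unfolding ha A2_main_inv_def by simp
  have rho_eq: "\<And>X. rho a X = MM c s p q r X"
    unfolding rho_def inv MM_def by (simp add: ha)
  have r3: "rho3 a = gg c s p q r"
    by (rule ext) (simp add: rho3_def gg_def rho_eq)
  have P1: "\<forall>x\<in>A01. rho a x \<in> A01"
  proof
    fix x assume "x \<in> A01"
    then obtain x0 x1 x2 where "x = A2 x0 x1 x2 0" unfolding A01_def by (cases x) auto
    thus "rho a x \<in> A01" unfolding A01_def rho_eq by (simp add: MM12)
  qed
  have P2: "rho3 a \<in> SO3"
    unfolding SO3_def r3 orthogonal_transformation_def
    using gg_linear gg_inner[OF cs pq] gg_det[OF cs pq] by simp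
  have P3: "v \<noteq> A2_real 0" using pq unfolding v A2_real_def by auto
  have P4: "rho a v = v" unfolding rho_eq v by (rule MMfix[OF cs pq])
  have P5: "rotation_about (rho3 a) (to3 v) (2 * \<theta>)"
    unfolding rotation_about_def
  proof (intro conjI allI impI)
    show "rho3 a (to3 v) = to3 v"
      unfolding rho3_def using P4 v by (simp add: to3_def of3_def)
  next
    fix w1 w2 :: "real^3"
    assume H: "w1 \<bullet> to3 v = 0 \<and> w2 \<bullet> to3 v = 0 \<and> norm w1 = 1 \<and> norm w2 = 1 \<and> w1 \<bullet> w2 = 0 \<and>
       positive_basis3 (to3 v) w1 w2"
    have nv: "norm (to3 v) = 1"
      using pq unfolding v to3_def norm_eq_sqrt_inner by (simp add: inner_vec_def sum_3 power2_eq_square)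
    have tv: "to3 v $ 1 = p" "to3 v $ 2 = q" "to3 v $ 3 = r" unfolding v to3_def by simp_all
    have w2: "w2 = vector [q * w1$3 - r * w1$2, r * w1$1 - p * w1$3, p * w1$2 - q * w1$1]"
      using orth_basis_cross[OF nv] H unfolding tv by blast
    have o1: "p * w1$1 + q * w1$2 + r * w1$3 = 0"
      using H unfolding v to3_def by (simp add: inner_vec_def sum_3 algebra_simps)
    have o2: "p * w2$1 + q * w2$2 + r * w2$3 = 0"
      using H unfolding v to3_def by (simp add: inner_vec_def sum_3 algebra_simps)
    have c2: "cos (2*\<theta>) = c^2 - s^2" "sin (2*\<theta>) = 2 * s * c"
      unfolding c_def s_def by (simp_all add: cos_double sin_double)
    note R1 = MMrot[OF cs pq o1] and R2 = MMrot[OF cs pq o2]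
    have w2c: "w2$1 = q * w1$3 - r * w1$2" "w2$2 = r * w1$1 - p * w1$3" "w2$3 = p * w1$2 - q * w1$1"
      by (subst w2, simp)+
    show "rho3 a w1 = cos (2 * \<theta>) *\<^sub>R w1 + sin (2 * \<theta>) *\<^sub>R w2"
      unfolding r3 c2 vec_eq_iff forall_3 gg_comp R1
      by (simp add: w2c algebra_simps)
    show "rho3 a w2 = (- sin (2 * \<theta>)) *\<^sub>R w1 + cos (2 * \<theta>) *\<^sub>R w2"
      unfolding r3 c2 vec_eq_iff forall_3 gg_comp R2
      using pq o1 by (simp add: w2c algebra_simps) (intro conjI; algebra)
  qed
  show ?thesis using P1 P2 P3 P4 P5 by blast
qed

end
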